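(* Assume the standing setting and let $\epsilon>0$. If $|u^0_i-u^0_{i+1}|\le \epsilon/3^{M}$ for all $i\in\mathbb Z$, then for every $j\in\mathbb Z$, $|w^N_j-w^N_{j+1}|\le\epsilon$ (i.e. $|d_1-d_2|\le\epsilon$ with $d_1=w^N_j$, $d_2=w^N_{j+1}$).
   Context: Standing setting. Let $F:\mathbb R\to\mathbb R$ be continuously differentiable. For a spatial step $\eta>0$, a time step $\tau>0$ and an initial sequence $(z^0_i)_{i\in\mathbb Z}$ of reals, the EFC (Euler forward in time, centered in space) scheme produces $(z^n_i)_{i\in\mathbb Z,\,n\in\mathbb N}$ by $z^{n+1}_i=z^n_i-F'(z^n_i)\frac{\tau}{2\eta}\,(z^n_{i+1}-z^n_{i-1})$. It satisfies the CFL condition if $|F'(z^n_i)|\,\tau/\eta\le 1$ for all $i\in\mathbb Z$, $n\in\mathbb N$. Fix $a\in\mathbb R$, $h>0$, $\Delta t>0$, an integer $N>1$ and an even integer $r\ge 2$; put $k=h/r$, $dt=\Delta t/r$, $M=Nr$. Let $u_0:\mathbb R\to\mathbb R$. The coarse solution $(w^n_j)$ is the EFC scheme with $\eta=h$, $\tau=\Delta t$, $w^0_j=u_0(a+jh)$; the fine solution $(u^n_i)$ is the EFC scheme with $\eta=k$, $\tau=dt$, $u^0_i=u_0(a+ik)$ (so $w^0_j=u^0_{jr}$). Both are assumed to satisfy the CFL condition. *)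

theory Defs
  imports "HOL-Analysis.Analysis"
begin

text \<open>EFC scheme (Euler forward in time, centered in space).
  efc F' eta tau z0 n i = z^n_i, where F' is the derivative of the flux F.\<close>
fun efc :: "(real \<Rightarrow> real) \<Rightarrow> real \<Rightarrow> real \<Rightarrow> (int \<Rightarrow> real) \<Rightarrow> nat \<Rightarrow> int \<Rightarrow> real" where
  "efc F' eta tau z0 0 i = z0 i"
| "efc F' eta tau z0 (Suc n) i =
     efc F' eta tau z0 n i
     - F' (efc F' eta tau z0 n i) * (tau / (2 * eta))
       * (efc F' eta tau z0 n (i + 1) - efc F' eta tau z0 n (i - 1))"

definition CFL :: "(real \<Rightarrow> real) \<Rightarrow> real \<Rightarrow> real \<Rightarrow> (int \<Rightarrow> real) \<Rightarrow> bool" where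
  "CFL F' eta tau z0 \<longleftrightarrow> (\<forall>n i. \<bar>F' (efc F' eta tau z0 n i)\<bar> * tau / eta \<le> 1)"

end

theory Submission
  imports Defs
begin

lemma tele:
  fixes g :: "int \<Rightarrow> real"
  assumes "\<And>i. \<bar>g i - g (i+1)\<bar> \<le> d"
  shows "\<bar>g i - g (i + int m)\<bar> \<le> real m * d"
proof (induction m)
  case 0 then show ?case by simp
next
  case (Suc m)
  have "\<bar>g i - g (i + int (Suc m))\<bar> \<le> \<bar>g i - g (i + int m)\<bar> + \<bar>g (i + int m) - g (i + int m + 1)\<bar>"
    by (simp add: add_ac)
  also have "\<dots> \<le> real m * d + d" using Suc assms[of "i + int m"] by linarith
  finally show ?case by (simp add: algebra_simps)
qed

lemma coef_bound:
  assumes "CFL F' eta tau z0" "eta > 0" "tau > 0"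
  shows "\<bar>F' (efc F' eta tau z0 n i) * (tau / (2 * eta))\<bar> \<le> 1/2"
proof -
  have "\<bar>F' (efc F' eta tau z0 n i)\<bar> * tau / eta \<le> 1" using assms(1) unfolding CFL_def by blast
  then show ?thesis using assms(2,3) by (simp add: abs_mult field_simps)
qed

lemma growth:
  assumes "CFL F' eta tau z0" "eta > 0" "tau > 0"
    and "\<And>i. \<bar>z0 i - z0 (i+1)\<bar> \<le> B"
  shows "\<bar>efc F' eta tau z0 n j - efc F' eta tau z0 n (j+1)\<bar> \<le> 3^n * B"
proof (induction n arbitrary: j)
  case 0 then show ?case using assms(4) by simp
next
  case (Suc n)
  define z where "z = efc F' eta tau z0 n"
  define c where "c = (\<lambda>i. F' (z i) * (tau / (2 * eta)))"
  have cb: "\<bar>c i\<bar> \<le> 1/2" for i unfolding c_def z_def using coef_bound[OF assms(1-3)] .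
  have zb: "\<bar>z i - z (i+1)\<bar> \<le> 3^n * B" for i unfolding z_def using Suc .
  have e: "efc F' eta tau z0 (Suc n) j - efc F' eta tau z0 (Suc n) (j+1)
     = (z j - z (j+1)) - c j * (z (j+1) - z (j-1)) + c (j+1) * (z (j+2) - z j)"
    by (simp add: z_def c_def algebra_simps)
  have d1: "\<bar>z (j+1) - z (j-1)\<bar> \<le> 2 * 3^n * B"
    using zb[of "j-1"] zb[of j] by simp
  have d2: "\<bar>z (j+2) - z j\<bar> \<le> 2 * 3^n * B"
    using zb[of "j+1"] zb[of j] by (simp add: add.assoc)
  have B0: "0 \<le> 3^n * B" using zb[of 0] by linarith
  have m1: "\<bar>c j * (z (j+1) - z (j-1))\<bar> \<le> 1/2 * (2 * 3^n * B)"
    unfolding abs_mult by (rule mult_mono) (use cb d1 B0 in auto)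
  have m2: "\<bar>c (j+1) * (z (j+2) - z j)\<bar> \<le> 1/2 * (2 * 3^n * B)"
    unfolding abs_mult by (rule mult_mono) (use cb d2 B0 in auto)
  have "\<bar>efc F' eta tau z0 (Suc n) j - efc F' eta tau z0 (Suc n) (j+1)\<bar> \<le> 3^n*B + 1/2 * (2 * 3^n * B) + 1/2 * (2 * 3^n * B)"
    unfolding e using zb[of j] m1 m2 by linarith
  then show ?case by (simp add: algebra_simps)
qed

lemma r_le: "real r \<le> 3 ^ (r - 1)"
proof (induction r)
  case 0 then show ?case by simp
next
  case (Suc r)
  show ?case
  proof (cases r)
    case 0 then show ?thesis by simp
  next
    case (Suc q)
    then have "real (Suc r) \<le> 3 ^ (r - 1) + 1" using Suc.IH by simp
    also have "\<dots> \<le> 3 * 3 ^ (r - 1)" using one_le_power[of "3::real" "r-1"] by linarith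
    also have "\<dots> = 3 ^ (Suc r - 1)" using Suc by simp
    finally show ?thesis .
  qed
qed

theorem corollary2:
  fixes F F' :: "real \<Rightarrow> real" and u0 :: "real \<Rightarrow> real"
    and a h \<Delta>t \<epsilon> :: real and N r :: nat
  assumes F_deriv: "\<And>x. (F has_real_derivative F' x) (at x)"
    and F'_cont: "continuous_on UNIV F'"
    and h_pos: "h > 0" and dt_pos: "\<Delta>t > 0"
    and N_gt: "N > 1" and r_even: "even r" and r_ge: "r \<ge> 2"
    and eps_pos: "\<epsilon> > 0"
    and CFL_coarse: "CFL F' h \<Delta>t (\<lambda>j. u0 (a + real_of_int j * h))"
    and CFL_fine: "CFL F' (h / real r) (\<Delta>t / real r) (\<lambda>i. u0 (a + real_of_int i * (h / real r)))"
    and small: "\<And>i::int. \<bar>efc F' (h / real r) (\<Delta>t / real r) (\<lambda>i. u0 (a + real_of_int i * (h / real r))) 0 i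
                      - efc F' (h / real r) (\<Delta>t / real r) (\<lambda>i. u0 (a + real_of_int i * (h / real r))) 0 (i + 1)\<bar>
                    \<le> \<epsilon> / 3 ^ (N * r)"
  shows "\<forall>j::int. \<bar>efc F' h \<Delta>t (\<lambda>j. u0 (a + real_of_int j * h)) N j
                   - efc F' h \<Delta>t (\<lambda>j. u0 (a + real_of_int j * h)) N (j + 1)\<bar> \<le> \<epsilon>"
proof
  fix j :: int
  define g where "g = (\<lambda>i::int. u0 (a + real_of_int i * (h / real r)))"
  define d where "d = \<epsilon> / 3 ^ (N * r)"
  have gs: "\<bar>g i - g (i+1)\<bar> \<le> d" for i using small[of i] unfolding g_def d_def by simp
  have rpos: "real r > 0" using r_ge by simp
  have gid: "g (k * int r) = u0 (a + real_of_int k * h)" for k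
    unfolding g_def using rpos by simp
  have init: "\<bar>u0 (a + real_of_int k * h) - u0 (a + real_of_int (k+1) * h)\<bar> \<le> real r * d" for k
  proof -
    have "\<bar>g (k * int r) - g (k * int r + int r)\<bar> \<le> real r * d" by (rule tele[where g=g and d=d, OF gs])
    moreover have "k * int r + int r = (k+1) * int r" by (simp add: algebra_simps)
    ultimately show ?thesis using gid[of k] gid[of "k+1"] by simp
  qed
  have G: "\<bar>efc F' h \<Delta>t (\<lambda>j. u0 (a + real_of_int j * h)) N j
                   - efc F' h \<Delta>t (\<lambda>j. u0 (a + real_of_int j * h)) N (j + 1)\<bar> \<le> 3^N * (real r * d)"
    by (rule growth[OF CFL_coarse h_pos dt_pos]) (use init in simp)
  have "3^N * real r \<le> (3::real)^N * 3^(r-1)" using r_le[of r] by simp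
  also have "\<dots> = 3 ^ (N + (r - 1))" by (simp add: power_add)
  also have "\<dots> \<le> 3 ^ (N * r)"
  proof (rule power_increasing)
    have "N + (r - 1) \<le> N * r" using N_gt r_ge
    proof -
      obtain q where q: "r = Suc q" using r_ge by (cases r) auto
      have "q \<le> N * q" using N_gt by simp
      then show ?thesis using q by simp
    qed
    then show "N + (r - 1) \<le> N * r" .
  qed simp
  finally have le: "3^N * real r \<le> 3 ^ (N * r)" .
  have "3^N * (real r * d) = (3^N * real r) * \<epsilon> / 3 ^ (N * r)" unfolding d_def by simp
  also have "\<dots> \<le> \<epsilon>" using le eps_pos by (simp add: field_simps)
  finally show "\<bar>efc F' h \<Delta>t (\<lambda>j. u0 (a + real_of_int j * h)) N j
                   - efc F' h \<Delta>t (\<lambda>j. u0 (a + real_of_int j * h)) N (j + 1)\<bar> \<le> \<epsilon>" using G by linarith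
qed

end
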